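(* For each random context grammar $G$ there is a random context grammar $G'$ with $L(G')=L(G)$ such that every production $(A\to x,\mathit{Per},\mathit{For})$ of $G'$ satisfies $A\notin\mathit{For}$.
   Context: For an alphabet $V$, $V^+=V^*-\{\lambda\}$, and $\mathit{alph}(w)$ is the set of symbols occurring in $w$. A random context grammar is a quadruple $G=(N,T,P,S)$ where $N$ and $T$ are disjoint finite alphabets of nonterminals and terminals, $V=N\cup T$, $S\in N$, and $P$ is a finite set of productions $(A\to x,\mathit{Per},\mathit{For})$ with $A\in N$, $x\in V^+$ (no erasing productions), $\mathit{Per},\mathit{For}\subseteq N$. For $u,v\in V^*$, $uAv\Rightarrow uxv$ holds if $\mathit{Per}\subseteq\mathit{alph}(uv)$ and $\mathit{alph}(uv)\cap\mathit{For}=\emptyset$. $L(G)=\{w\in T^*:S\Rightarrow^*w\}$. *)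

theory Defs
  imports Main
begin

text \<open>Symbols: nonterminals and terminals live in disjoint parts of a sum type,
so N and T are automatically disjoint.\<close>
datatype ('n, 't) sym = NT 'n | Tm 't

type_synonym ('n, 't) rc_prod = "'n \<times> ('n, 't) sym list \<times> 'n set \<times> 'n set"

record ('n, 't) rcg =
  Nts   :: "'n set"
  Tms   :: "'t set"
  Prods :: "('n, 't) rc_prod set"
  Start :: 'n

definition sym_in :: "('n, 't) rcg \<Rightarrow> ('n, 't) sym \<Rightarrow> bool" where
  "sym_in G s = (case s of NT A \<Rightarrow> A \<in> Nts G | Tm a \<Rightarrow> a \<in> Tms G)"

definition rcg_wf :: "('n, 't) rcg \<Rightarrow> bool" where
  "rcg_wf G \<longleftrightarrow> finite (Nts G) \<and> finite (Tms G) \<and> Start G \<in> Nts G \<and> finite (Prods G) \<and>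
     (\<forall>(A, x, Per, For) \<in> Prods G.
        A \<in> Nts G \<and> x \<noteq> [] \<and> (\<forall>s \<in> set x. sym_in G s) \<and> Per \<subseteq> Nts G \<and> For \<subseteq> Nts G)"

definition rc_step :: "('n, 't) rcg \<Rightarrow> ('n, 't) sym list \<Rightarrow> ('n, 't) sym list \<Rightarrow> bool" where
  "rc_step G w w' \<longleftrightarrow> (\<exists>u v A x Per For. (A, x, Per, For) \<in> Prods G \<and>
      w = u @ [NT A] @ v \<and> w' = u @ x @ v \<and>
      NT ` Per \<subseteq> set (u @ v) \<and> set (u @ v) \<inter> NT ` For = {})"

definition rc_lang :: "('n, 't) rcg \<Rightarrow> 't list set" where
  "rc_lang G = {w. w \<in> lists (Tms G) \<and> (rc_step G)\<^sup>*\<^sup>* [NT (Start G)] (map Tm w)}"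

end

theory Submission
  imports Defs
begin

definition enc :: "('n, 't) sym \<Rightarrow> (('n, 't) sym \<times> nat, 't) sym" where
  "enc s = (case s of NT A \<Rightarrow> NT (NT A, 0) | Tm a \<Rightarrow> Tm a)"

definition marks :: "('n, 't) rcg \<Rightarrow> (('n, 't) sym \<times> nat) set" where
  "marks G = (\<lambda>A. (NT A, 1)) ` Nts G"

definition lift :: "'n set \<Rightarrow> (('n, 't) sym \<times> nat) set" where
  "lift S = (\<lambda>A. (NT A, 0)) ` S"

definition G2 :: "('n, 't) rcg \<Rightarrow> (('n, 't) sym \<times> nat, 't) rcg" where
  "G2 G = \<lparr>Nts = (\<lambda>A. (NT A, 0)) ` Nts G \<union> marks G, Tms = Tms G,
     Prods = (\<lambda>A. ((NT A, 0), [NT (NT A, 1)], {}, marks G)) ` Nts G \<union>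
       (\<lambda>(A, x, P, F). ((NT A, 1), map enc x, lift P, lift F \<union> (marks G - {(NT A, 1)}))) ` Prods G,
     Start = (NT (Start G), 0)\<rparr>"

lemma G2_simps: "Tms (G2 G) = Tms G" "Start (G2 G) = (NT (Start G), 0)"
  unfolding G2_def by simp_all

lemma G2_Nts: "Nts (G2 G) = (\<lambda>A. (NT A, 0)) ` Nts G \<union> marks G"
  unfolding G2_def by simp
lemma G2_Prods: "Prods (G2 G) = (\<lambda>A. ((NT A, 0), [NT (NT A, 1)], {}, marks G)) ` Nts G \<union>
       (\<lambda>(A, x, P, F). ((NT A, 1), map enc x, lift P, lift F \<union> (marks G - {(NT A, 1)}))) ` Prods G"
  unfolding G2_def by simp
lemma t1: assumes "finite (Nts G)" "finite (Prods G)" shows "finite (Nts (G2 G))" "finite (Prods (G2 G))"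
  using assms unfolding G2_Nts G2_Prods marks_def by simp_all
lemma encin: "sym_in G s \<Longrightarrow> sym_in (G2 G) (enc s)"
    unfolding sym_in_def enc_def G2_Nts G2_simps marks_def by (auto split: sym.splits)

lemma enc_inj: "inj enc"
  unfolding inj_def enc_def by (auto split: sym.splits)

lemma enc_NT0[simp]: "(enc s = NT (NT A, 0)) = (s = NT A)"
  unfolding enc_def by (auto split: sym.splits)

lemma enc_NT0'[simp]: "(NT (NT A, 0) = enc s) = (s = NT A)"
  unfolding enc_def by (auto split: sym.splits)

lemma enc_NT1'[simp]: "n \<noteq> 0 \<Longrightarrow> NT (X, n) \<noteq> enc s"
  unfolding enc_def by (auto split: sym.splits)

lemma enc_NT1[simp]: "n \<noteq> 0 \<Longrightarrow> enc s \<noteq> NT (X, n)"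
  unfolding enc_def by (auto split: sym.splits)

lemma enc_Tm[simp]: "enc (Tm a) = Tm a" "enc (NT A) = NT (NT A, 0)"
  unfolding enc_def by auto

lemma map_enc_Tm: "map enc (map Tm w) = map Tm w"
  by (induction w) auto

lemma map_enc_eq_Tm: "map enc y = map Tm w \<Longrightarrow> y = map Tm w"
  by (metis map_enc_Tm enc_inj inj_map_eq_map)

lemma mark_notin: "NT (X, 1) \<notin> set (map enc u)"
  by (auto simp: enc_def split: sym.splits)

lemma step_sim:
  fixes G :: "('n, 't) rcg"
  assumes wf: "rcg_wf G" and st: "rc_step G y y'"
  shows "(rc_step (G2 G))\<^sup>*\<^sup>* (map enc y) (map enc y')"
proof -
  from st obtain u v A x Per For where H: "(A, x, Per, For) \<in> Prods G \<and>
    y = u @ [NT A] @ v \<and> y' = u @ x @ v \<and>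
    NT ` Per \<subseteq> set (u @ v) \<and> set (u @ v) \<inter> NT ` For = {}"
    unfolding rc_step_def by (elim exE) (rule that)
  from H have p: "(A, x, Per, For) \<in> Prods G"
    and y: "y = u @ [NT A] @ v" and y': "y' = u @ x @ v"
    and per: "NT ` Per \<subseteq> set (u @ v)" and fo: "set (u @ v) \<inter> NT ` For = {}" by auto
  have A: "A \<in> Nts G" using wf p unfolding rcg_wf_def by fastforce
  let ?m = "map enc u @ [NT (NT A, 1)] @ map enc v"
  have s1: "rc_step (G2 G) (map enc y) ?m"
    unfolding rc_step_def
    apply (rule exI[of _ "map enc u"], rule exI[of _ "map enc v"], rule exI[of _ "(NT A, 0)"],
           rule exI[of _ "[NT (NT A, 1)]"], rule exI[of _ "{}"], rule exI[of _ "marks G"])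
  proof (intro conjI)
    show "((NT A, 0), [NT (NT A, 1)], {}, marks G) \<in> Prods (G2 G)"
      using A unfolding G2_Prods by blast
    show "set (map enc u @ map enc v) \<inter> NT ` marks G = {}"
      unfolding marks_def using mark_notin by auto
  qed (use y in auto)
  have s2: "rc_step (G2 G) ?m (map enc y')"
    unfolding rc_step_def
    apply (rule exI[of _ "map enc u"], rule exI[of _ "map enc v"], rule exI[of _ "(NT A, 1)"],
           rule exI[of _ "map enc x"], rule exI[of _ "lift Per"],
           rule exI[of _ "lift For \<union> (marks G - {(NT A, 1)})"])
  proof (intro conjI)
    show "((NT A, 1), map enc x, lift Per, lift For \<union> (marks G - {(NT A, 1)})) \<in> Prods (G2 G)"
      using p unfolding G2_Prods by force
    show "NT ` lift Per \<subseteq> set (map enc u @ map enc v)"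
    proof
      fix z :: "(('n, 't) sym \<times> nat, 't) sym" assume "z \<in> NT ` lift Per"
      then obtain B where B: "B \<in> Per" "z = NT (NT B, 0)" unfolding lift_def by auto
      then have "NT B \<in> set (u @ v)" using per by auto
      then have "enc (NT B) \<in> set (map enc (u @ v))" unfolding set_map by (rule imageI)
      then show "z \<in> set (map enc u @ map enc v)" using B by simp
    qed
    show "set (map enc u @ map enc v) \<inter> NT ` (lift For \<union> (marks G - {(NT A, 1)})) = {}"
    proof (rule ccontr)
      assume "\<not> ?thesis"
      then obtain z where z1: "z \<in> set (map enc u @ map enc v)"
        and z2: "z \<in> NT ` (lift For \<union> (marks G - {(NT A, 1)}))" by blast
      from z1 obtain s where s1: "s \<in> set (u @ v)" "z = enc s" by auto
      from z2 obtain X where X: "X \<in> lift For \<union> (marks G - {(NT A, 1)})" "z = NT X" by blast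
      have s: "s \<in> set (u @ v)" "enc s = NT X" "X \<in> lift For \<union> (marks G - {(NT A, 1)})"
        using s1 X by auto
      show False
      proof (cases "X \<in> lift For")
        case True
        then obtain B where "B \<in> For" "X = (NT B, 0)" unfolding lift_def by auto
        then show False using s fo by auto
      next
        case False
        then obtain B where "X = (NT B, 1)" using s unfolding marks_def by auto
        then show False using s by simp
      qed
    qed
  qed (use y' in auto)
  show ?thesis using s1 s2 by simp
qed

lemma sim_fwd:
  assumes "(rc_step G)\<^sup>*\<^sup>* a b" "rcg_wf G"
  shows "(rc_step (G2 G))\<^sup>*\<^sup>* (map enc a) (map enc b)"
  using assms(1)
proof (induction rule: rtranclp_induct)
  case base then show ?case by simp
next
  case (step y z)
  then show ?case using step_sim[OF assms(2)] by (meson rtranclp_trans)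
qed

definition Inv :: "('n, 't) rcg \<Rightarrow> (('n, 't) sym \<times> nat, 't) sym list \<Rightarrow> bool" where
  "Inv G z = (\<exists>y. (rc_step G)\<^sup>*\<^sup>* [NT (Start G)] y \<and> (z = map enc y \<or>
     (\<exists>u A v. A \<in> Nts G \<and> y = u @ [NT A] @ v \<and> z = map enc u @ [NT (NT A, 1)] @ map enc v)))"

lemma inv_step:
  fixes G :: "('n, 't) rcg"
  assumes I: "Inv G z" and st: "rc_step (G2 G) z z'"
  shows "Inv G z'"
proof -
  from I obtain y where dy: "(rc_step G)\<^sup>*\<^sup>* [NT (Start G)] y" and
    c: "z = map enc y \<or> (\<exists>u A v. A \<in> Nts G \<and> y = u @ [NT A] @ v \<and> z = map enc u @ [NT (NT A, 1)] @ map enc v)"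
    unfolding Inv_def by blast
  from st obtain u' v' X x' Per' For' where H: "(X, x', Per', For') \<in> Prods (G2 G) \<and>
    z = u' @ [NT X] @ v' \<and> z' = u' @ x' @ v' \<and>
    NT ` Per' \<subseteq> set (u' @ v') \<and> set (u' @ v') \<inter> NT ` For' = {}"
    unfolding rc_step_def by (elim exE) (rule that)
  from H have p: "(X, x', Per', For') \<in> Prods (G2 G)"
    and z: "z = u' @ [NT X] @ v'" and z': "z' = u' @ x' @ v'"
    and per: "NT ` Per' \<subseteq> set (u' @ v')" and fo: "set (u' @ v') \<inter> NT ` For' = {}" by auto
  from p consider (mk) B where "B \<in> Nts G" "X = (NT B, 0)" "x' = [NT (NT B, 1)]" "Per' = {}" "For' = marks G"
    | (cp) B x Per For where "(B, x, Per, For) \<in> Prods G" "X = (NT B, 1)" "x' = map enc x"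
        "Per' = lift Per" "For' = lift For \<union> (marks G - {(NT B, 1)})"
    unfolding G2_Prods by auto
  then show ?thesis
  proof cases
    case mk
    from c show ?thesis
    proof
      assume zy: "z = map enc y"
      then have "map enc y = u' @ NT (NT B, 0) # v'" using z mk by simp
      then obtain u v0 where "y = u @ v0" "u' = map enc u" "NT (NT B, 0) # v' = map enc v0"
        by (auto simp: map_eq_append_conv)
      then obtain v where "y = u @ NT B # v" "u' = map enc u" "v' = map enc v"
        by (auto simp: Cons_eq_map_conv)
      then have "B \<in> Nts G \<and> y = u @ [NT B] @ v \<and> z' = map enc u @ [NT (NT B, 1)] @ map enc v"
        using mk z' by auto
      then have "\<exists>u A v. A \<in> Nts G \<and> y = u @ [NT A] @ v \<and> z' = map enc u @ [NT (NT A, 1)] @ map enc v"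
        by blast
      then show ?thesis unfolding Inv_def using dy by blast
    next
      assume "\<exists>u A v. A \<in> Nts G \<and> y = u @ [NT A] @ v \<and> z = map enc u @ [NT (NT A, 1)] @ map enc v"
      then obtain u and A :: 'n and v where A: "A \<in> Nts G" "z = map enc u @ [NT (NT A, 1)] @ map enc v" by blast
      have "NT (NT A, 1) \<in> set z" using A by simp
      then have m: "NT (NT A, 1) \<in> set (u' @ [NT X] @ v')" unfolding z .
      have "NT (NT A, 1) \<noteq> NT X" using mk by simp
      with m have "NT (NT A, 1) \<in> set (u' @ v')" unfolding set_append by auto
      moreover have "NT (NT A, 1) \<in> NT ` For'" using mk(5) A(1) unfolding marks_def by blast
      ultimately have "NT (NT A, 1) \<in> set (u' @ v') \<inter> NT ` For'" by (rule IntI)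
      then have False by (simp only: fo empty_iff)
      then show ?thesis ..
    qed
  next
    case cp
    from c show ?thesis
    proof
      assume zy: "z = map enc y"
      have "NT X \<in> set z" using z by simp
      then have False using zy cp(2) by auto
      then show ?thesis ..
    next
      assume "\<exists>u A v. A \<in> Nts G \<and> y = u @ [NT A] @ v \<and> z = map enc u @ [NT (NT A, 1)] @ map enc v"
      then obtain u and A :: 'n and v where A: "A \<in> Nts G" "y = u @ [NT A] @ v" "z = map enc u @ [NT (NT A, 1)] @ map enc v" by blast
      have "NT X \<in> set z" using z by simp
      then have XA: "X = (NT A, 1)" using A cp by auto
      have "map enc u @ NT (NT A, 1) # map enc v = u' @ NT (NT A, 1) # v'" using A z XA by simp
      moreover have n1: "NT (NT A, 1) \<notin> set (map enc u)" "NT (NT A, 1) \<notin> set (map enc v)"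
        by (rule mark_notin)+
      ultimately have "map enc u = u' \<and> map enc v = v'"
        using append_Cons_eq_iff[OF n1, of u' v'] by blast
      then have uv: "u' = map enc u" "v' = map enc v" by auto
      have BA: "B = A" using XA cp by simp
      have gst: "rc_step G y (u @ x @ v)"
        unfolding rc_step_def
      proof (intro exI conjI)
        show "(A, x, Per, For) \<in> Prods G" using cp BA by simp
        show "y = u @ [NT A] @ v" using A by simp
        show "u @ x @ v = u @ x @ v" by simp
        show "NT ` Per \<subseteq> set (u @ v)"
        proof
          fix s :: "('n, 't) sym" assume "s \<in> NT ` Per"
          then obtain C where C: "C \<in> Per" "s = NT C" by auto
          then have "NT (NT C, 0) \<in> set (map enc u @ map enc v)" using per cp uv unfolding lift_def by auto
          then obtain t where "t \<in> set (u @ v)" "enc t = NT (NT C, 0)" by auto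
          then show "s \<in> set (u @ v)" using C by simp
        qed
        show "set (u @ v) \<inter> NT ` For = {}"
        proof (rule ccontr)
          assume "\<not> ?thesis"
          then obtain C where C: "C \<in> For" "NT C \<in> set (u @ v)" by auto
          then have "enc (NT C) \<in> set (u' @ v')" using uv by auto
          moreover have "enc (NT C) \<in> NT ` For'" using cp C unfolding lift_def by auto
          ultimately show False using fo by blast
        qed
      qed
      have "(rc_step G)\<^sup>*\<^sup>* [NT (Start G)] (u @ x @ v)" using dy gst by simp
      moreover have "z' = map enc (u @ x @ v)" using z' uv cp by simp
      ultimately show ?thesis unfolding Inv_def by blast
    qed
  qed
qed

lemma inv_steps:
  assumes "(rc_step (G2 G))\<^sup>*\<^sup>* a b" "Inv G a"
  shows "Inv G b"
  using assms by (induction rule: rtranclp_induct) (auto intro: inv_step)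

lemma wf_G2:
  assumes wf: "rcg_wf G"
  shows "rcg_wf (G2 G)"
proof -
  have fin: "finite (Nts G)" "finite (Tms G)" "finite (Prods G)" "Start G \<in> Nts G"
    using wf unfolding rcg_wf_def by auto
  have pr: "\<And>A x P F. (A, x, P, F) \<in> Prods G \<Longrightarrow>
     A \<in> Nts G \<and> x \<noteq> [] \<and> (\<forall>s \<in> set x. sym_in G s) \<and> P \<subseteq> Nts G \<and> F \<subseteq> Nts G"
    using wf unfolding rcg_wf_def by fastforce
  show ?thesis
    unfolding rcg_wf_def
  proof (intro conjI)
    show "finite (Nts (G2 G))" "finite (Prods (G2 G))" using t1 fin by auto
    show "finite (Tms (G2 G))" using fin by (simp add: G2_simps)
    show "Start (G2 G) \<in> Nts (G2 G)" using fin by (simp add: G2_simps G2_Nts)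
    show "\<forall>(A, x, Per, For) \<in> Prods (G2 G). A \<in> Nts (G2 G) \<and> x \<noteq> [] \<and>
        (\<forall>s \<in> set x. sym_in (G2 G) s) \<and> Per \<subseteq> Nts (G2 G) \<and> For \<subseteq> Nts (G2 G)"
    proof (clarify)
      fix A x Per For assume "(A, x, Per, For) \<in> Prods (G2 G)"
      then consider (mk) B where "B \<in> Nts G" "A = (NT B, 0)" "x = [NT (NT B, 1)]" "Per = {}" "For = marks G"
        | (cp) B y P F where "(B, y, P, F) \<in> Prods G" "A = (NT B, 1)" "x = map enc y"
          "Per = lift P" "For = lift F \<union> (marks G - {(NT B, 1)})"
        unfolding G2_Prods by auto
      then show "A \<in> Nts (G2 G) \<and> x \<noteq> [] \<and> (\<forall>s \<in> set x. sym_in (G2 G) s) \<and> Per \<subseteq> Nts (G2 G) \<and> For \<subseteq> Nts (G2 G)"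
      proof cases
        case mk then show ?thesis unfolding G2_Nts marks_def sym_in_def by auto
      next
        case cp
        then have h: "B \<in> Nts G \<and> y \<noteq> [] \<and> (\<forall>s \<in> set y. sym_in G s) \<and> P \<subseteq> Nts G \<and> F \<subseteq> Nts G"
          using pr by blast
        have "\<forall>s \<in> set x. sym_in (G2 G) s" using h cp encin by auto
        moreover have "A \<in> Nts (G2 G)" using h cp unfolding G2_Nts marks_def by auto
        moreover have "Per \<subseteq> Nts (G2 G)" using h cp unfolding G2_Nts lift_def by auto
        moreover have "For \<subseteq> Nts (G2 G)" using h cp unfolding G2_Nts lift_def marks_def by auto
        ultimately show ?thesis using h cp by simp
      qed
    qed
  qed
qed

theorem lemma1:
  fixes G :: "('n, 't) rcg"
  assumes "rcg_wf G"
  shows "\<exists>G' :: (('n, 't) sym \<times> nat, 't) rcg.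
           rcg_wf G' \<and> rc_lang G' = rc_lang G \<and>
           (\<forall>(A, x, Per, For) \<in> Prods G'. A \<notin> For)"
proof (intro exI conjI)
  show "rcg_wf (G2 G)" using wf_G2[OF assms] .
  show "\<forall>(A, x, Per, For) \<in> Prods (G2 G). A \<notin> For"
    unfolding G2_Prods marks_def lift_def by auto
  show "rc_lang (G2 G) = rc_lang G"
  proof
    show "rc_lang (G2 G) \<subseteq> rc_lang G"
    proof
      fix w assume "w \<in> rc_lang (G2 G)"
      then have w: "w \<in> lists (Tms G)" "(rc_step (G2 G))\<^sup>*\<^sup>* [NT (NT (Start G), 0)] (map Tm w)"
        unfolding rc_lang_def G2_simps by auto
      have "Inv G [NT (NT (Start G), 0)]" unfolding Inv_def
        by (rule exI[of _ "[NT (Start G)]"]) simp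
      then have "Inv G (map Tm w)" using inv_steps w(2) by blast
      then obtain y where dy: "(rc_step G)\<^sup>*\<^sup>* [NT (Start G)] y" and
        c: "map Tm w = map enc y \<or> (\<exists>u A v. A \<in> Nts G \<and> y = u @ [NT A] @ v \<and> map Tm w = map enc u @ [NT (NT A, 1)] @ map enc v)"
        unfolding Inv_def by blast
      have "map Tm w = map enc y"
      proof (rule ccontr)
        assume "map Tm w \<noteq> map enc y"
        then have "\<exists>u (A::'n) v. map Tm w = map enc u @ [NT (NT A, 1)] @ map enc v" using c by blast
        then obtain u and A :: 'n and v where "map Tm w = map enc u @ [NT (NT A, 1)] @ map enc v" by blast
        then have "set (map Tm w) = set (map enc u @ [NT (NT A, 1)] @ map enc v)" by (rule arg_cong)
        then show False by auto
      qed
      then have "y = map Tm w" using map_enc_eq_Tm by metis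
      then show "w \<in> rc_lang G" using dy w(1) unfolding rc_lang_def by auto
    qed
  next
    show "rc_lang G \<subseteq> rc_lang (G2 G)"
    proof
      fix w assume "w \<in> rc_lang G"
      then have w: "w \<in> lists (Tms G)" "(rc_step G)\<^sup>*\<^sup>* [NT (Start G)] (map Tm w)"
        unfolding rc_lang_def by auto
      have "(rc_step (G2 G))\<^sup>*\<^sup>* (map enc [NT (Start G)]) (map enc (map Tm w))"
        using sim_fwd[OF w(2) assms] .
      then show "w \<in> rc_lang (G2 G)" using w(1) unfolding rc_lang_def map_enc_Tm G2_simps
        by simp
    qed
  qed
qed

end
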